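(* Let $U$ be a $d\times d$ unitary matrix, $U_{ij}=\langle a_i|b_j\rangle$ for two orthonormal bases $\{|a_i\rangle\}$, $\{|b_j\rangle\}$ of $\mathbb{C}^d$, and let $p_i=\langle a_i|\rho|a_i\rangle$, $q_j=\langle b_j|\rho|b_j\rangle$ for a state $\rho$ on $\mathbb{C}^d$. For $k=1,\dots,d$ let $s_k=\max\{\|M\|: M \text{ a submatrix of } U \text{ with } \#\mathrm{cols}(M)+\#\mathrm{rows}(M)=k+1\}$, where $\|M\|$ is the largest singular value, and let $W=(W_1,\dots,W_d)=(s_1,s_2-s_1,\dots,s_d-s_{d-1})$. Then for every $\alpha>1$, $$H_\alpha(p)+H_\alpha(q)\ge\frac{2}{1-\alpha}\ln\left(\frac{1+\sum_i W_i^\alpha}{2}\right).$$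
   Context: The Rényi entropy of order $\alpha\neq1$ of a probability vector $x$ is $H_\alpha(x)=\frac{1}{1-\alpha}\ln\sum_i x_i^\alpha$. A submatrix is obtained by selecting a nonempty set of rows and a nonempty set of columns. *)

theory Defs
  imports "HOL-Analysis.Analysis"
begin

definition cinner :: "complex ^ 'n::finite \<Rightarrow> complex ^ 'n \<Rightarrow> complex" where
  "cinner x y = (\<Sum>i\<in>UNIV. cnj (x $ i) * y $ i)"

definition orthonormal_basis_c :: "('n::finite \<Rightarrow> complex ^ 'n) \<Rightarrow> bool" where
  "orthonormal_basis_c a \<longleftrightarrow> (\<forall>i j. cinner (a i) (a j) = (if i = j then 1 else 0))"

definition density_matrix :: "complex ^ 'n ^ 'n::finite \<Rightarrow> bool" where
  "density_matrix \<rho> \<longleftrightarrow>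
     (\<forall>i j. \<rho> $ i $ j = cnj (\<rho> $ j $ i)) \<and>
     (\<forall>x. cinner x (\<rho> *v x) \<in> \<real> \<and> 0 \<le> Re (cinner x (\<rho> *v x))) \<and>
     (\<Sum>i\<in>UNIV. \<rho> $ i $ i) = 1"

text \<open>Operator (spectral) norm = largest singular value of the submatrix of U with
  row set I and column set J.\<close>
definition submatrix_norm :: "complex ^ 'n ^ 'n::finite \<Rightarrow> 'n set \<Rightarrow> 'n set \<Rightarrow> real" where
  "submatrix_norm U I J =
     Sup {sqrt (\<Sum>i\<in>I. (cmod (\<Sum>j\<in>J. U $ i $ j * x $ j))\<^sup>2) | x.
            (\<Sum>j\<in>J. (cmod (x $ j))\<^sup>2) = 1}"

definition s_seq :: "complex ^ 'n ^ 'n::finite \<Rightarrow> nat \<Rightarrow> real" where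
  "s_seq U k = Max {submatrix_norm U I J | I J.
       I \<noteq> {} \<and> J \<noteq> {} \<and> card I + card J = k + 1}"

definition W_seq :: "complex ^ 'n ^ 'n::finite \<Rightarrow> nat \<Rightarrow> real" where
  "W_seq U k = (if k = 1 then s_seq U 1 else s_seq U k - s_seq U (k - 1))"

definition renyi_entropy :: "real \<Rightarrow> ('n::finite \<Rightarrow> real) \<Rightarrow> real" where
  "renyi_entropy \<alpha> p = 1 / (1 - \<alpha>) * ln (\<Sum>i\<in>UNIV. p i powr \<alpha>)"

end

theory Submission
  imports Defs
begin


lemma powr_tangent:
  fixes x y a :: real
  assumes "x \<ge> 0" "y \<ge> 0" "a > 1"
  shows "y powr a \<ge> x powr a + a * x powr (a - 1) * (y - x)"
proof (cases "x = 0")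
  case True then show ?thesis using assms by simp
next
  case xne: False
  then have xp: "x > 0" using assms by simp
  show ?thesis
  proof (cases "y = 0")
    case True
    have e: "x powr a = x powr (a - 1) * x"
      using powr_mult_base[of x "a - 1"] xp by (simp add: mult.commute)
    have "x powr a + a * x powr (a - 1) * (y - x) = x powr (a-1) * x * (1 - a)"
      using True e by (simp add: algebra_simps)
    also have "\<dots> \<le> 0"
    proof (rule mult_nonneg_nonpos)
      show "0 \<le> x powr (a - 1) * x" using xp by simp
      show "1 - a \<le> 0" using assms by simp
    qed
    finally show ?thesis using True by simp
  next
    case yne: False
    have "y powr a - x powr a \<ge> (a * x powr (a - 1)) * (y - x)"
    proof (rule convex_on_imp_above_tangent[where A="{0<..}"])
      show "convex_on {0<..} (\<lambda>x. x powr a)" using assms powr_convex[of a] by simp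
      show "connected {0::real<..}" by (rule convex_connected) (rule convex_real_interval)
      show "x \<in> interior {0<..}" using xp interior_open[OF open_greaterThan, of "0::real"] by simp
      show "y \<in> {0<..}" using assms yne by simp
      show "((\<lambda>x. x powr a) has_field_derivative a * x powr (a - 1)) (at x within {0<..})"
        by (rule has_field_derivative_at_within[OF has_real_derivative_powr[OF xp]])
    qed
    then show ?thesis by simp
  qed
qed

lemma abel_nonneg_aux:
  fixes g d :: "nat \<Rightarrow> real"
  assumes dec: "\<And>k. g (Suc k) \<le> g k" and nn: "\<And>k. g k \<ge> 0"
    and pre: "\<And>k. k \<le> N \<Longrightarrow> (\<Sum>m<k. d m) \<ge> 0"
  shows "n \<le> N \<Longrightarrow> (\<Sum>k<n. g k * d k) \<ge> g n * (\<Sum>m<n. d m)"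
proof (induction n)
  case 0 then show ?case by simp
next
  case (Suc n)
  have "(\<Sum>k<Suc n. g k * d k) = (\<Sum>k<n. g k * d k) + g n * d n" by simp
  also have "\<dots> \<ge> g n * (\<Sum>m<n. d m) + g n * d n" using Suc by simp
  also have "g n * (\<Sum>m<n. d m) + g n * d n = g n * (\<Sum>m<Suc n. d m)"
    by (simp add: algebra_simps)
  also have "\<dots> \<ge> g (Suc n) * (\<Sum>m<Suc n. d m)"
    using pre[of "Suc n"] Suc.prems dec[of n] by (intro mult_right_mono) auto
  finally show ?case by simp
qed

lemma abel_nonneg:
  fixes g d :: "nat \<Rightarrow> real"
  assumes dec: "\<And>k. g (Suc k) \<le> g k" and nn: "\<And>k. g k \<ge> 0"
    and pre: "\<And>k. k \<le> N \<Longrightarrow> (\<Sum>m<k. d m) \<ge> 0"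
  shows "(\<Sum>k<N. g k * d k) \<ge> 0"
proof -
  have "(\<Sum>k<N. g k * d k) \<ge> g N * (\<Sum>m<N. d m)"
    using abel_nonneg_aux[of g N d N] dec nn pre by blast
  moreover have "g N * (\<Sum>m<N. d m) \<ge> 0" using nn pre[of N] by simp
  ultimately show ?thesis by linarith
qed

lemma weak_major_powr:
  fixes x :: "'t::finite \<Rightarrow> real" and y :: "nat \<Rightarrow> real" and a :: real
  assumes xnn: "\<And>t. x t \<ge> 0" and ynn: "\<And>k. k < CARD('t) \<Longrightarrow> y k \<ge> 0" and a: "a > 1"
    and maj: "\<And>S. (\<Sum>t\<in>S. x t) \<le> (\<Sum>m<card S. y m)"
  shows "(\<Sum>t\<in>UNIV. x t powr a) \<le> (\<Sum>m<CARD('t). y m powr a)"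
proof -
  define N where "N = CARD('t)"
  obtain zs where zs: "set zs = (UNIV::'t set)" "distinct zs"
    using finite_distinct_list[of "UNIV::'t set"] by auto
  define ws where "ws = sort_key (\<lambda>t. - x t) zs"
  have ws: "set ws = UNIV" "distinct ws" "sorted (map (\<lambda>t. - x t) ws)"
    using zs unfolding ws_def by auto
  have lw: "length ws = N"
    using ws distinct_card[of ws] unfolding N_def by simp
  have bij: "bij_betw ((!) ws) {..<N} UNIV"
    using bij_betw_nth[of ws "{..<N}" UNIV] ws lw by simp
  define xs where "xs k = x (ws ! k)" for k
  have sumx: "(\<Sum>t\<in>UNIV. f t) = (\<Sum>k<N. f (ws ! k))" for f :: "'t \<Rightarrow> real"
    using sum.reindex_bij_betw[OF bij, of f] by simp
  have xsdec: "xs j \<le> xs i" if "i \<le> j" "j < N" for i j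
    using sorted_nth_mono[OF ws(3) that(1)] that lw unfolding xs_def by simp
  have pre: "(\<Sum>m<k. y m - xs m) \<ge> 0" if "k \<le> N" for k
  proof -
    have inj: "inj_on ((!) ws) {..<k}"
      using inj_on_subset[OF bij_betw_imp_inj_on[OF bij], of "{..<k}"] that by auto
    have "(\<Sum>m<k. xs m) = (\<Sum>t\<in>((!) ws) ` {..<k}. x t)"
      using sum.reindex[OF inj, of x] unfolding xs_def by simp
    also have "\<dots> \<le> (\<Sum>m<card (((!) ws) ` {..<k}). y m)" by (rule maj)
    also have "card (((!) ws) ` {..<k}) = k" using card_image[OF inj] by simp
    finally show ?thesis by (simp add: sum_subtractf)
  qed
  define g where "g k = (if k < N then a * xs k powr (a - 1) else 0)" for k
  have gdec: "g (Suc k) \<le> g k" for k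
  proof (cases "Suc k < N")
    case True
    then have "xs (Suc k) powr (a - 1) \<le> xs k powr (a - 1)"
      using xsdec[of k "Suc k"] xnn a unfolding xs_def by (intro powr_mono2) auto
    then show ?thesis using True a unfolding g_def by simp
  next
    case False
    then show ?thesis using a unfolding g_def by simp
  qed
  have gnn: "g k \<ge> 0" for k using a unfolding g_def by simp
  have "(\<Sum>k<N. g k * (y k - xs k)) \<ge> 0"
    by (rule abel_nonneg[of g N "\<lambda>k. y k - xs k", OF gdec gnn pre])
  also have "(\<Sum>k<N. g k * (y k - xs k)) \<le> (\<Sum>k<N. y k powr a - xs k powr a)"
  proof (rule sum_mono)
    fix k assume "k \<in> {..<N}"
    then have "k < N" by simp
    then show "g k * (y k - xs k) \<le> y k powr a - xs k powr a"
      using powr_tangent[of "xs k" "y k" a] xnn ynn[of k] a unfolding g_def xs_def N_def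
      by simp
  qed
  finally have "(\<Sum>k<N. xs k powr a) \<le> (\<Sum>k<N. y k powr a)"
    by (simp add: sum_subtractf)
  then show ?thesis using sumx[of "\<lambda>t. x t powr a"] unfolding xs_def N_def by simp
qed



lemma cinner_add_left: "cinner (x + y) z = cinner x z + cinner y z"
  unfolding cinner_def by (simp add: algebra_simps sum.distrib)
lemma cinner_add_right: "cinner z (x + y) = cinner z x + cinner z y"
  unfolding cinner_def by (simp add: algebra_simps sum.distrib)
lemma cinner_diff_left: "cinner (x - y) z = cinner x z - cinner y z"
  unfolding cinner_def by (simp add: algebra_simps sum_subtractf)
lemma cinner_diff_right: "cinner z (x - y) = cinner z x - cinner z y"
  unfolding cinner_def by (simp add: algebra_simps sum_subtractf)
lemma cinner_axis_left: "cinner (axis i c) y = cnj c * y $ i"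
proof -
  have eq: "(\<lambda>ia. cnj (axis i c $ ia) * y $ ia) = (\<lambda>ia. if ia = i then cnj c * y $ ia else 0)"
    by (auto simp: axis_def)
  show ?thesis unfolding cinner_def eq by simp
qed
lemma cinner_axis_right: "cinner y (axis i c) = cnj (y $ i) * c"
proof -
  have eq: "(\<lambda>ia. cnj (y $ ia) * axis i c $ ia) = (\<lambda>ia. if ia = i then cnj (y $ ia) * c else 0)"
    by (auto simp: axis_def)
  show ?thesis unfolding cinner_def eq by simp
qed
lemma mv_axis: "(M *v axis j d) = (\<chi> i. M $ i $ j * d)"
  unfolding matrix_vector_mult_def axis_def by (simp add: vec_eq_iff if_distrib cong: if_cong)
lemma mv_diff: fixes M :: "complex^'n::finite^'m" shows "(M *v (x - y)) = M *v x - M *v y"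
  unfolding matrix_vector_mult_def by (simp add: vec_eq_iff right_diff_distrib sum_subtractf)
lemma mv_add: "(M *v (x + y)) = M *v x + M *v y"
  unfolding matrix_vector_mult_def by (simp add: vec_eq_iff algebra_simps sum.distrib)
lemma cinner_mv: "cinner x (M *v y) = (\<Sum>r\<in>UNIV. \<Sum>s\<in>UNIV. cnj (x $ r) * M $ r $ s * y $ s)"
  unfolding cinner_def matrix_vector_mult_def by (simp add: sum_distrib_left mult.assoc)

lemma cinner_axis_mv_axis: "cinner (axis i c) (M *v axis j d) = cnj c * M $ i $ j * d"
  by (simp add: cinner_axis_left mv_axis mult.assoc)

definition LF :: "complex^'n::finite^'n \<Rightarrow> complex^'n^'n \<Rightarrow> complex" where
  "LF c M = (\<Sum>r\<in>UNIV. \<Sum>s\<in>UNIV. c $ r $ s * M $ r $ s)"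

definition outer :: "complex^'n::finite \<Rightarrow> complex^'n^'n" where
  "outer w = (\<chi> r s. w $ r * cnj (w $ s))"

lemma psd_diag_zero:
  fixes \<rho> :: "complex^'n::finite^'n"
  assumes herm: "\<forall>i j. \<rho>$i$j = cnj (\<rho>$j$i)" and psd: "\<forall>x. 0 \<le> Re (cinner x (\<rho> *v x))"
    and kk: "\<rho>$k$k = 0"
  shows "\<rho>$r$k = 0"
proof (rule ccontr)
  assume z0: "\<rho>$r$k \<noteq> 0"
  define z where "z = \<rho>$r$k"
  have rk: "r \<noteq> k" using z0 kk by auto
  have kr: "\<rho>$k$r = cnj z" using herm unfolding z_def by blast
  define s where "s = (\<bar>Re (\<rho>$r$r)\<bar> + 1) / (2 * (cmod z)^2)"
  define t where "t = - (of_real s * cnj z)"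
  define x where "x = axis r (1::complex) + axis k t"
  have e1: "cinner x (\<rho> *v x) = \<rho>$r$r + z * t + cnj t * cnj z"
    unfolding x_def mv_add cinner_add_left cinner_add_right cinner_axis_mv_axis
    using kk kr unfolding z_def by simp
  have e2: "z * t + cnj t * cnj z = - of_real (2 * s * (cmod z)^2)"
    unfolding t_def using complex_norm_square[of z]
    by (simp add: algebra_simps)
  have "cinner x (\<rho> *v x) = \<rho>$r$r + (z * t + cnj t * cnj z)" using e1 by (simp add: add.assoc)
  also have "\<dots> = \<rho>$r$r - of_real (2 * s * (cmod z)^2)" unfolding e2 by simp
  finally have e3: "Re (cinner x (\<rho> *v x)) = Re (\<rho>$r$r) - 2 * s * (cmod z)^2" by simp
  have e4: "2 * s * (cmod z)^2 = \<bar>Re (\<rho>$r$r)\<bar> + 1"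
    unfolding s_def using z0 unfolding z_def by simp
  have "Re (cinner x (\<rho> *v x)) < 0" using e3 e4 by linarith
  then show False using psd by (meson not_le)
qed

lemma psd_functional:
  fixes c :: "complex^'n::finite^'n"
  assumes pure: "\<And>w. 0 \<le> Re (LF c (outer w))"
  shows "\<And>\<rho>. card {k. \<exists>r. \<rho>$r$k \<noteq> 0} = n \<Longrightarrow> \<forall>i j. \<rho>$i$j = cnj (\<rho>$j$i) \<Longrightarrow>
     \<forall>x. 0 \<le> Re (cinner x (\<rho> *v x)) \<Longrightarrow> 0 \<le> Re (LF c \<rho>)"
proof (induction n rule: less_induct)
  case (less n \<rho>)
  note herm = less.prems(2) and psd = less.prems(3)
  show ?case
  proof (cases "\<rho> = 0")
    case True then show ?thesis unfolding LF_def by simp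
  next
    case False
    then obtain r k where rk: "\<rho>$r$k \<noteq> 0" by (auto simp: vec_eq_iff)
    define d where "d = \<rho>$k$k"
    have d0: "d \<noteq> 0" using psd_diag_zero[OF herm psd, of k r] rk unfolding d_def by auto
    have dreal: "cnj d = d" using herm unfolding d_def by metis
    then have dR: "d = of_real (Re d)" by (simp add: complex_eq_iff)
    have "Re d = Re (cinner (axis k 1) (\<rho> *v axis k 1))"
      unfolding cinner_axis_mv_axis d_def by simp
    then have "Re d \<ge> 0" using psd by simp
    moreover have "Re d \<noteq> 0" using d0 dR by (metis of_real_0)
    ultimately have dpos: "Re d > 0" by simp
    define \<rho>' where "\<rho>' = (\<chi> i j. \<rho>$i$j - \<rho>$i$k * \<rho>$k$j / d)"
    have herm': "\<forall>i j. \<rho>'$i$j = cnj (\<rho>'$j$i)"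
    proof (intro allI)
      fix i j
      have h1: "cnj (\<rho>$j$i) = \<rho>$i$j" "cnj (\<rho>$j$k) = \<rho>$k$j" "cnj (\<rho>$k$i) = \<rho>$i$k"
        using herm by (metis complex_cnj_cnj)+
      show "\<rho>'$i$j = cnj (\<rho>'$j$i)"
        unfolding \<rho>'_def using dreal h1
        by (simp add: mult.commute)
    qed
    have psd': "\<forall>x. 0 \<le> Re (cinner x (\<rho>' *v x))"
    proof
      fix x
      define \<gamma> where "\<gamma> = (\<rho> *v x) $ k"
      define \<beta> where "\<beta> = (\<Sum>i\<in>UNIV. cnj (x$i) * \<rho>$i$k)"
      have h2: "\<rho>$i$k = cnj (\<rho>$k$i)" for i using herm by blast
      have b: "\<beta> = cnj \<gamma>"
        unfolding \<beta>_def \<gamma>_def matrix_vector_mult_def h2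
        by (simp add: mult.commute)
      define t where "t = \<gamma> / d"
      have ct: "cnj t = \<beta> / d" unfolding t_def using b dreal by simp
      have mv': "\<rho>' *v x = \<rho> *v x - (\<chi> i. \<rho>$i$k * \<gamma> / d)"
        unfolding \<rho>'_def \<gamma>_def matrix_vector_mult_def
        by (simp add: vec_eq_iff left_diff_distrib sum_subtractf sum_distrib_left sum_divide_distrib
             mult.assoc)
      have c1: "cinner x (\<chi> i. \<rho>$i$k * \<gamma> / d) = \<beta> * \<gamma> / d"
        unfolding cinner_def \<beta>_def by (simp add: sum_distrib_right sum_divide_distrib mult.assoc)
      have c2: "cinner x (\<rho> *v axis k t) = \<beta> * t"
        unfolding mv_axis cinner_def \<beta>_def by (simp add: sum_distrib_right mult.assoc)
      have c3: "cinner (axis k t) (\<rho> *v x) = cnj t * \<gamma>"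
        unfolding cinner_axis_left \<gamma>_def by simp
      have c4: "cinner (axis k t) (\<rho> *v axis k t) = cnj t * d * t"
        unfolding cinner_axis_mv_axis d_def by simp
      have "cinner (x - axis k t) (\<rho> *v (x - axis k t)) =
          cinner x (\<rho> *v x) - \<beta> * t - cnj t * \<gamma> + cnj t * d * t"
        unfolding mv_diff cinner_diff_left cinner_diff_right c2 c3 c4 by simp
      also have "\<dots> = cinner x (\<rho> *v x) - \<beta> * \<gamma> / d"
        unfolding ct t_def using d0 by (simp add: field_simps)
      also have "\<dots> = cinner x (\<rho>' *v x)"
        unfolding mv' cinner_diff_right c1 by simp
      finally show "0 \<le> Re (cinner x (\<rho>' *v x))" using psd by metis
    qed
    define C where "C M = {k. \<exists>r. M$r$k \<noteq> (0::complex)}" for M :: "complex^'n^'n"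
    have sub: "C \<rho>' \<subseteq> C \<rho> - {k}"
    proof
      fix j assume "j \<in> C \<rho>'"
      then obtain i where ij: "\<rho>'$i$j \<noteq> 0" unfolding C_def by auto
      have "j \<noteq> k" using ij d0 unfolding \<rho>'_def d_def by auto
      moreover have "j \<in> C \<rho>"
      proof (rule ccontr)
        assume "j \<notin> C \<rho>"
        then have "\<forall>i. \<rho>$i$j = 0" unfolding C_def by auto
        then show False using ij unfolding \<rho>'_def by simp
      qed
      ultimately show "j \<in> C \<rho> - {k}" by simp
    qed
    have kC: "k \<in> C \<rho>" unfolding C_def using rk by auto
    have "card (C \<rho>') < n"
    proof -
      have "card (C \<rho>') \<le> card (C \<rho> - {k})" by (rule card_mono[OF _ sub]) simp
      also have "\<dots> < card (C \<rho>)" using kC by (intro card_Diff1_less) auto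
      finally show ?thesis using less.prems(1) unfolding C_def by simp
    qed
    then have ih: "0 \<le> Re (LF c \<rho>')"
      using less.IH[OF _ _ herm' psd'] unfolding C_def by blast
    define w where "w = (\<chi> i. \<rho>$i$k)"
    have ow: "outer w $ i $ j = \<rho>$i$k * \<rho>$k$j" for i j
    proof -
      have "\<rho>$k$j = cnj (\<rho>$j$k)" using herm by blast
      then show ?thesis unfolding outer_def w_def by simp
    qed
    have "LF c \<rho>' = (\<Sum>r\<in>UNIV. \<Sum>s\<in>UNIV. c$r$s * \<rho>$r$s - c$r$s * (\<rho>$r$k * \<rho>$k$s) / d)"
      unfolding LF_def \<rho>'_def by (simp add: right_diff_distrib)
    also have "\<dots> = LF c \<rho> - LF c (outer w) / d"
      unfolding LF_def ow by (simp add: sum_subtractf sum_divide_distrib)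
    finally have "LF c \<rho> = LF c \<rho>' + LF c (outer w) / d" by simp
    then have "Re (LF c \<rho>) = Re (LF c \<rho>') + Re (LF c (outer w)) / Re d"
      using dR by (metis Re_divide_of_real plus_complex.sel(1))
    moreover have "Re (LF c (outer w)) / Re d \<ge> 0" using pure[of w] dpos by simp
    ultimately show ?thesis using ih by simp
  qed
qed



lemma cinner_commute: "cinner x y = cnj (cinner y x)"
  unfolding cinner_def by (simp add: mult.commute)
lemma cinner_scale_left: "cinner (c *s x) y = cnj c * cinner x y"
  unfolding cinner_def by (simp add: sum_distrib_left mult.assoc)
lemma cinner_scale_right: "cinner x (c *s y) = c * cinner x y"
  unfolding cinner_def by (simp add: sum_distrib_left algebra_simps)
lemma cinner_zero_right: "cinner w 0 = 0" unfolding cinner_def by simp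
lemma cinner_zero_left: "cinner 0 w = 0" unfolding cinner_def by simp
lemma cinner_sum_right: "cinner w (sum f I) = (\<Sum>i\<in>I. cinner w (f i))"
  by (induction I rule: infinite_finite_induct) (simp_all add: cinner_zero_right cinner_add_right)
lemma cinner_sum_left: "cinner (sum f I) w = (\<Sum>i\<in>I. cinner (f i) w)"
  by (induction I rule: infinite_finite_induct) (simp_all add: cinner_zero_left cinner_add_left)
lemma cinner_self_real: "cinner x x = of_real (\<Sum>r\<in>UNIV. (cmod (x $ r))^2)"
proof -
  have "cnj (x $ r) * x $ r = of_real ((cmod (x $ r))^2)" for r
    using complex_norm_square[of "x $ r"] by (simp add: mult.commute)
  then show ?thesis unfolding cinner_def of_real_sum by simp
qed
lemma inner_cinner: "inner x y = Re (cinner x y)"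
  unfolding inner_vec_def cinner_def inner_complex_def by (simp add: Re_sum)
lemma norm_cinner: "(norm x)^2 = Re (cinner x x)"
  by (simp add: power2_norm_eq_inner inner_cinner)

lemma cinner_cs: "cmod (cinner x y) \<le> norm x * norm y"
proof (cases "cinner x y = 0")
  case True then show ?thesis by simp
next
  case False
  define z where "z = cinner x y"
  define c where "c = cnj z / of_real (cmod z)"
  have zz: "z * cnj z = of_real (cmod z) * of_real (cmod z)"
    using complex_norm_square[of z] by (simp add: power2_eq_square)
  have cz: "c * z = of_real (cmod z)"
    unfolding c_def using False zz unfolding z_def
    by (simp add: field_simps)
  have cc: "cnj c * c = 1"
    unfolding c_def using False zz unfolding z_def
    by (simp add: field_simps)
  have "cmod z = Re (cinner x (c *s y))" unfolding cinner_scale_right z_def[symmetric] cz by simp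
  also have "\<dots> = inner x (c *s y)" by (simp add: inner_cinner)
  also have "\<dots> \<le> norm x * norm (c *s y)" by (rule norm_cauchy_schwarz)
  also have "norm (c *s y) = norm y"
  proof -
    have "cinner (c *s y) (c *s y) = (cnj c * c) * cinner y y"
      by (simp add: cinner_scale_left cinner_scale_right mult.assoc)
    then have "cinner (c *s y) (c *s y) = cinner y y" using cc by simp
    then have "(norm (c *s y))^2 = (norm y)^2" by (simp add: norm_cinner)
    then show ?thesis by (simp add: power2_eq_iff_nonneg)
  qed
  finally show ?thesis unfolding z_def .
qed

lemma completeness:
  fixes a :: "'n::finite \<Rightarrow> complex^'n"
  assumes "orthonormal_basis_c a"
  shows "(\<Sum>i\<in>UNIV. a i $ r * cnj (a i $ s)) = (if r = s then 1 else 0)"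
proof -
  define A :: "complex^'n^'n" where "A = (\<chi> r i. a i $ r)"
  define Ah :: "complex^'n^'n" where "Ah = (\<chi> i r. cnj (a i $ r))"
  have "Ah ** A = mat 1"
    using assms unfolding orthonormal_basis_c_def cinner_def
    by (simp add: vec_eq_iff matrix_matrix_mult_def A_def Ah_def mat_def)
  then have "A ** Ah = mat 1" using matrix_left_right_inverse by blast
  then have "(A ** Ah) $ r $ s = mat 1 $ r $ s" by simp
  then show ?thesis by (simp add: matrix_matrix_mult_def A_def Ah_def mat_def)
qed

lemma parseval:
  assumes "orthonormal_basis_c a"
  shows "(\<Sum>i\<in>UNIV. cinner (a i) x * cnj (cinner (a i) y)) = cinner y x"
proof -
  have "(\<Sum>i\<in>UNIV. cinner (a i) x * cnj (cinner (a i) y))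
      = (\<Sum>i\<in>UNIV. \<Sum>s\<in>UNIV. \<Sum>r\<in>UNIV. x $ r * (cnj (y $ s) * (a i $ s * cnj (a i $ r))))"
    unfolding cinner_def by (simp add: sum_distrib_left sum_distrib_right algebra_simps)
  also have "\<dots> = (\<Sum>s\<in>UNIV. \<Sum>i\<in>UNIV. \<Sum>r\<in>UNIV. x $ r * (cnj (y $ s) * (a i $ s * cnj (a i $ r))))"
    by (rule sum.swap)
  also have "\<dots> = (\<Sum>s\<in>UNIV. \<Sum>r\<in>UNIV. \<Sum>i\<in>UNIV. x $ r * cnj (y $ s) * (a i $ s * cnj (a i $ r)))"
    by (rule sum.cong[OF refl], subst sum.swap) (simp add: mult.assoc)
  also have "\<dots> = (\<Sum>s\<in>UNIV. \<Sum>r\<in>UNIV. x $ r * cnj (y $ s) * (\<Sum>i\<in>UNIV. a i $ s * cnj (a i $ r)))"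
    by (simp only: sum_distrib_left)
  also have "\<dots> = (\<Sum>s\<in>UNIV. x $ s * cnj (y $ s))"
    unfolding completeness[OF assms] by (simp add: if_distrib cong: if_cong)
  also have "\<dots> = cinner y x" unfolding cinner_def by (simp add: mult.commute)
  finally show ?thesis .
qed

lemma trace_basis:
  assumes "orthonormal_basis_c a"
  shows "(\<Sum>i\<in>UNIV. cinner (a i) (M *v a i)) = (\<Sum>r\<in>UNIV. M $ r $ r)"
proof -
  have "(\<Sum>i\<in>UNIV. cinner (a i) (M *v a i))
      = (\<Sum>i\<in>UNIV. \<Sum>r\<in>UNIV. \<Sum>s\<in>UNIV. M $ r $ s * (a i $ s * cnj (a i $ r)))"
    unfolding cinner_mv by (simp add: algebra_simps)
  also have "\<dots> = (\<Sum>r\<in>UNIV. \<Sum>i\<in>UNIV. \<Sum>s\<in>UNIV. M $ r $ s * (a i $ s * cnj (a i $ r)))"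
    by (rule sum.swap)
  also have "\<dots> = (\<Sum>r\<in>UNIV. \<Sum>s\<in>UNIV. \<Sum>i\<in>UNIV. M $ r $ s * (a i $ s * cnj (a i $ r)))"
    by (rule sum.cong[OF refl], rule sum.swap)
  also have "\<dots> = (\<Sum>r\<in>UNIV. \<Sum>s\<in>UNIV. M $ r $ s * (\<Sum>i\<in>UNIV. a i $ s * cnj (a i $ r)))"
    by (simp only: sum_distrib_left)
  also have "\<dots> = (\<Sum>r\<in>UNIV. M $ r $ r)"
    unfolding completeness[OF assms] by (simp add: if_distrib cong: if_cong)
  finally show ?thesis .
qed



lemma onb_inner: "orthonormal_basis_c a \<Longrightarrow> cinner (a i) (a j) = (if i = j then 1 else 0)"
  unfolding orthonormal_basis_c_def by blast

lemma cinner_combo_self: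
  assumes "orthonormal_basis_c a"
  shows "cinner (\<Sum>i\<in>I. f i *s a i) (\<Sum>i\<in>I. f i *s a i) = of_real (\<Sum>i\<in>I. (cmod (f i))^2)"
proof -
  have "cinner (\<Sum>i\<in>I. f i *s a i) (\<Sum>i\<in>I. f i *s a i)
      = (\<Sum>i\<in>I. f i * (\<Sum>ia\<in>I. cnj (f ia) * (if ia = i then 1 else 0)))"
    unfolding cinner_sum_left cinner_sum_right cinner_scale_left cinner_scale_right onb_inner[OF assms]
    by simp
  also have "\<dots> = (\<Sum>i\<in>I. f i * cnj (f i))"
    by (rule sum.cong[OF refl]) (simp add: if_distrib sum.delta cong: if_cong)
  also have "\<dots> = of_real (\<Sum>i\<in>I. (cmod (f i))^2)"
    unfolding of_real_sum using complex_norm_square by simp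
  finally show ?thesis .
qed

lemma sum_UNIV_if: "(\<Sum>x\<in>(UNIV::'a::finite set). if x \<in> I then g x else 0) = (\<Sum>x\<in>I. g x)"
  using sum.inter_restrict[of "UNIV::'a set" g I] by simp

lemma sqrt_amgm: "a \<ge> 0 \<Longrightarrow> b \<ge> 0 \<Longrightarrow> 2 * (sqrt a * sqrt b) \<le> a + b"
proof -
  assume "a \<ge> 0" "b \<ge> 0"
  then have "0 \<le> (sqrt a - sqrt b)^2" by simp
  also have "(sqrt a - sqrt b)^2 = a + b - 2 * (sqrt a * sqrt b)"
    using \<open>a \<ge> 0\<close> \<open>b \<ge> 0\<close> by (simp add: power2_eq_square algebra_simps)
  finally show ?thesis by simp
qed

lemma pure_key:
  fixes a b :: "'n::finite \<Rightarrow> complex^'n" and w :: "complex^'n" and lam :: real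
  assumes oa: "orthonormal_basis_c a" and ob: "orthonormal_basis_c b" and lam: "lam \<ge> 0"
    and bnd: "\<And>x. (\<Sum>i\<in>I. (cmod (\<Sum>j\<in>J. cinner (a i) (b j) * x $ j))^2)
                 \<le> lam^2 * (\<Sum>j\<in>J. (cmod (x $ j))^2)"
  shows "(\<Sum>i\<in>I. (cmod (cinner (a i) w))^2) + (\<Sum>j\<in>J. (cmod (cinner (b j) w))^2)
           \<le> (1 + lam) * (norm w)^2"
proof -
  define \<alpha> where "\<alpha> i = cinner (a i) w" for i
  define \<beta> where "\<beta> j = cinner (b j) w" for j
  define A2 where "A2 = (\<Sum>i\<in>I. (cmod (\<alpha> i))^2)"
  define B2 where "B2 = (\<Sum>j\<in>J. (cmod (\<beta> j))^2)"
  define S where "S = A2 + B2"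
  have A2nn: "A2 \<ge> 0" unfolding A2_def by (simp add: sum_nonneg)
  have B2nn: "B2 \<ge> 0" unfolding B2_def by (simp add: sum_nonneg)
  define za where "za = (\<Sum>i\<in>I. \<alpha> i *s a i)"
  define zb where "zb = (\<Sum>j\<in>J. \<beta> j *s b j)"
  define z where "z = za + zb"
  have wa: "cinner w (\<alpha> i *s a i) = of_real ((cmod (\<alpha> i))^2)" for i
    unfolding cinner_scale_right using complex_norm_square[of "\<alpha> i"]
    by (simp add: \<alpha>_def cinner_commute[of w "a i"])
  have wb: "cinner w (\<beta> j *s b j) = of_real ((cmod (\<beta> j))^2)" for j
    unfolding cinner_scale_right using complex_norm_square[of "\<beta> j"]
    by (simp add: \<beta>_def cinner_commute[of w "b j"])
  have wz: "cinner w z = of_real S"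
    unfolding z_def za_def zb_def cinner_add_right cinner_sum_right wa wb S_def A2_def B2_def
    by simp
  define X where "X = cinner za zb"
  define v where "v i = (\<Sum>j\<in>J. cinner (a i) (b j) * \<beta> j)" for i
  have X: "X = (\<Sum>i\<in>I. cnj (\<alpha> i) * v i)"
    unfolding X_def za_def zb_def v_def cinner_sum_left cinner_sum_right cinner_scale_left
      cinner_scale_right
    by (simp add: sum_distrib_left algebra_simps) (rule sum.swap)
  define u' where "u' = (\<chi> i. if i \<in> I then \<alpha> i else 0)"
  define v' where "v' = (\<chi> i. if i \<in> I then v i else 0)"
  have "cinner u' v' = X"
    unfolding X cinner_def u'_def v'_def by (simp add: if_distrib sum.If_cases)
  then have "cmod X \<le> norm u' * norm v'" using cinner_cs by metis
  also have "norm u' = sqrt A2"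
  proof -
    have e: "(\<lambda>x. (cmod (u' $ x))^2) = (\<lambda>x. if x \<in> I then (cmod (\<alpha> x))^2 else 0)"
      by (auto simp: u'_def)
    have "(norm u')^2 = A2" unfolding norm_cinner cinner_self_real e sum_UNIV_if A2_def
      by simp
    then show ?thesis by (metis norm_ge_zero real_sqrt_unique)
  qed
  also have "norm v' \<le> lam * sqrt B2"
  proof -
    have e: "(\<lambda>x. (cmod (v' $ x))^2) = (\<lambda>x. if x \<in> I then (cmod (v x))^2 else 0)"
      by (auto simp: v'_def)
    have "(norm v')^2 = (\<Sum>i\<in>I. (cmod (v i))^2)" unfolding norm_cinner cinner_self_real e sum_UNIV_if
      by simp
    also have "\<dots> \<le> lam^2 * B2"
      using bnd[of "\<chi> j. \<beta> j"] unfolding v_def B2_def by simp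
    also have "\<dots> = (lam * sqrt B2)^2" using B2nn lam by (simp add: power_mult_distrib)
    finally show ?thesis using lam B2nn by (meson power2_le_imp_le mult_nonneg_nonneg real_sqrt_ge_zero)
  qed
  finally have Xb: "cmod X \<le> sqrt A2 * (lam * sqrt B2)"
    using A2nn by (simp add: mult_left_mono)
  have zz: "Re (cinner z z) = A2 + B2 + 2 * Re X"
  proof -
    have "cinner z z = cinner za za + cinner zb zb + X + cnj X"
      unfolding z_def cinner_add_left cinner_add_right X_def cinner_commute[of zb za] by simp
    moreover have "cinner za za = of_real A2" unfolding za_def A2_def by (rule cinner_combo_self[OF oa])
    moreover have "cinner zb zb = of_real B2" unfolding zb_def B2_def by (rule cinner_combo_self[OF ob])
    ultimately show ?thesis by simp
  qed
  have "Re X \<le> cmod X" by (rule complex_Re_le_cmod)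
  also have "\<dots> \<le> lam * (sqrt A2 * sqrt B2)" using Xb by (simp add: algebra_simps)
  finally have "2 * Re X \<le> lam * (2 * (sqrt A2 * sqrt B2))" by simp
  also have "\<dots> \<le> lam * S" unfolding S_def using sqrt_amgm[OF A2nn B2nn] lam
    by (intro mult_left_mono) auto
  finally have nz: "(norm z)^2 \<le> (1 + lam) * S" unfolding norm_cinner zz S_def
    by (simp add: algebra_simps)
  have Snn: "S \<ge> 0" unfolding S_def using A2nn B2nn by simp
  have "S \<le> norm w * norm z"
    using cinner_cs[of w z] unfolding wz using Snn by simp
  then have "S^2 \<le> (norm w)^2 * (norm z)^2" using Snn
    by (metis power_mono power_mult_distrib)
  also have "\<dots> \<le> (norm w)^2 * ((1 + lam) * S)" using nz by (simp add: mult_left_mono)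
  finally have S2: "S * S \<le> ((norm w)^2 * (1 + lam)) * S" by (simp add: power2_eq_square algebra_simps)
  have "S \<le> (1 + lam) * (norm w)^2"
  proof (cases "S = 0")
    case True then show ?thesis using lam by simp
  next
    case False
    then have "S > 0" using Snn by simp
    then show ?thesis using S2 by (simp add: mult.commute)
  qed
  then show ?thesis unfolding S_def A2_def B2_def \<alpha>_def \<beta>_def .
qed



definition coef :: "complex^'n::finite \<Rightarrow> complex^'n^'n" where
  "coef v = (\<chi> r s. cnj (v $ r) * v $ s)"

lemma LF_diff: "LF (c1 - c2) M = LF c1 M - LF c2 M"
  unfolding LF_def by (simp add: left_diff_distrib sum_subtractf)
lemma LF_add: "LF (c1 + c2) M = LF c1 M + LF c2 M"
  unfolding LF_def by (simp add: distrib_right sum.distrib)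
lemma LF_zero: "LF 0 M = 0" unfolding LF_def by simp
lemma LF_sum: "LF (\<Sum>i\<in>I. c i) M = (\<Sum>i\<in>I. LF (c i) M)"
  by (induction I rule: infinite_finite_induct) (simp_all add: LF_zero LF_add)
lemma LF_coef: "LF (coef v) M = cinner v (M *v v)"
  unfolding LF_def coef_def cinner_mv by (simp add: algebra_simps)
lemma LF_mat: "LF (mat k) M = k * (\<Sum>r\<in>UNIV. M $ r $ r)"
proof -
  have "LF (mat k) M = (\<Sum>r\<in>UNIV. \<Sum>s\<in>UNIV. if s = r then k * M $ r $ s else 0)"
    unfolding LF_def mat_def by (rule sum.cong[OF refl])+ auto
  also have "\<dots> = k * (\<Sum>r\<in>UNIV. M $ r $ r)" by (simp add: sum_distrib_left)
  finally show ?thesis .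
qed
lemma cinner_outer: "cinner v (outer w *v v) = of_real ((cmod (cinner v w))^2)"
proof -
  have "outer w *v v = (cinner w v) *s w"
    unfolding outer_def matrix_vector_mult_def cinner_def
    by (simp add: vec_eq_iff sum_distrib_left algebra_simps)
  then have "cinner v (outer w *v v) = cinner v w * cnj (cinner v w)"
    by (simp add: cinner_scale_right cinner_commute[of w v] mult.commute)
  then show ?thesis using complex_norm_square by simp
qed
lemma trace_outer: "(\<Sum>r\<in>UNIV. outer w $ r $ r) = of_real ((norm w)^2)"
proof -
  have "(\<Sum>r\<in>UNIV. outer w $ r $ r) = cinner w w"
    unfolding outer_def cinner_def by (simp add: mult.commute)
  also have "\<dots> = of_real ((norm w)^2)"
    using norm_cinner[of w] cinner_self_real[of w] by simp
  finally show ?thesis .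
qed

lemma dm_herm: "density_matrix \<rho> \<Longrightarrow> \<forall>i j. \<rho>$i$j = cnj (\<rho>$j$i)"
  unfolding density_matrix_def by blast
lemma dm_psd: "density_matrix \<rho> \<Longrightarrow> \<forall>x. 0 \<le> Re (cinner x (\<rho> *v x))"
  unfolding density_matrix_def by blast
lemma dm_tr: "density_matrix \<rho> \<Longrightarrow> (\<Sum>i\<in>UNIV. \<rho> $ i $ i) = 1"
  unfolding density_matrix_def by blast

lemma prob_sum:
  assumes "orthonormal_basis_c a" "density_matrix \<rho>"
  shows "(\<Sum>i\<in>UNIV. Re (cinner (a i) (\<rho> *v a i))) = 1"
  using trace_basis[OF assms(1), of \<rho>] dm_tr[OF assms(2)] by (simp add: Re_sum[symmetric])

lemma mixed_key:
  fixes a b :: "'n::finite \<Rightarrow> complex^'n" and lam :: real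
  assumes oa: "orthonormal_basis_c a" and ob: "orthonormal_basis_c b" and lam: "lam \<ge> 0"
    and dm: "density_matrix \<rho>"
    and bnd: "\<And>x. (\<Sum>i\<in>I. (cmod (\<Sum>j\<in>J. cinner (a i) (b j) * x $ j))^2)
                 \<le> lam^2 * (\<Sum>j\<in>J. (cmod (x $ j))^2)"
  shows "(\<Sum>i\<in>I. Re (cinner (a i) (\<rho> *v a i))) + (\<Sum>j\<in>J. Re (cinner (b j) (\<rho> *v b j))) \<le> 1 + lam"
proof -
  define c where "c = mat (of_real (1 + lam)) - (\<Sum>i\<in>I. coef (a i)) - (\<Sum>j\<in>J. coef (b j))"
  have LFc: "LF c M = of_real (1 + lam) * (\<Sum>r\<in>UNIV. M $ r $ r)
      - (\<Sum>i\<in>I. cinner (a i) (M *v a i)) - (\<Sum>j\<in>J. cinner (b j) (M *v b j))" for M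
    unfolding c_def LF_diff LF_sum LF_mat LF_coef by simp
  have pure: "0 \<le> Re (LF c (outer w))" for w
  proof -
    have "Re (LF c (outer w)) = (1 + lam) * (norm w)^2
       - (\<Sum>i\<in>I. (cmod (cinner (a i) w))^2) - (\<Sum>j\<in>J. (cmod (cinner (b j) w))^2)"
      unfolding LFc trace_outer cinner_outer by (simp add: Re_sum)
    then show ?thesis using pure_key[OF oa ob lam bnd, of w] by simp
  qed
  have "0 \<le> Re (LF c \<rho>)"
    using psd_functional[OF pure refl dm_herm[OF dm] dm_psd[OF dm]] .
  then show ?thesis unfolding LFc dm_tr[OF dm] by (simp add: Re_sum)
qed



definition snset :: "complex^'n::finite^'n \<Rightarrow> 'n set \<Rightarrow> 'n set \<Rightarrow> real set" where
  "snset U I J = {sqrt (\<Sum>i\<in>I. (cmod (\<Sum>j\<in>J. U $ i $ j * x $ j))\<^sup>2) | x.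
            (\<Sum>j\<in>J. (cmod (x $ j))\<^sup>2) = 1}"

lemma sn_def': "submatrix_norm U I J = Sup (snset U I J)"
  unfolding submatrix_norm_def snset_def ..

lemma sn_bdd: "bdd_above (snset U I J)"
proof (rule bdd_aboveI)
  fix t assume "t \<in> snset U I J"
  then obtain x where x: "(\<Sum>j\<in>J. (cmod (x $ j))\<^sup>2) = 1"
    and t: "t = sqrt (\<Sum>i\<in>I. (cmod (\<Sum>j\<in>J. U $ i $ j * x $ j))\<^sup>2)"
    unfolding snset_def by auto
  have xj: "cmod (x $ j) \<le> 1" if "j \<in> J" for j
  proof -
    have "(cmod (x $ j))^2 \<le> (\<Sum>j\<in>J. (cmod (x $ j))\<^sup>2)"
      using that by (intro member_le_sum) auto
    then have "(cmod (x $ j))^2 \<le> 1^2" using x by simp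
    then show ?thesis by (rule power2_le_imp_le) simp
  qed
  have "cmod (\<Sum>j\<in>J. U $ i $ j * x $ j) \<le> (\<Sum>j\<in>J. cmod (U $ i $ j))" for i
  proof -
    have "cmod (\<Sum>j\<in>J. U $ i $ j * x $ j) \<le> (\<Sum>j\<in>J. cmod (U $ i $ j * x $ j))"
      by (rule norm_sum)
    also have "\<dots> \<le> (\<Sum>j\<in>J. cmod (U $ i $ j))"
    proof (rule sum_mono)
      fix j assume "j \<in> J"
      then show "cmod (U $ i $ j * x $ j) \<le> cmod (U $ i $ j)"
        using xj[of j] by (simp add: norm_mult mult_left_le)
    qed
    finally show ?thesis .
  qed
  then have "(\<Sum>i\<in>I. (cmod (\<Sum>j\<in>J. U $ i $ j * x $ j))\<^sup>2) \<le> (\<Sum>i\<in>I. (\<Sum>j\<in>J. cmod (U $ i $ j))\<^sup>2)"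
    by (intro sum_mono power_mono) auto
  then show "t \<le> sqrt (\<Sum>i\<in>I. (\<Sum>j\<in>J. cmod (U $ i $ j))\<^sup>2)" unfolding t by simp
qed

lemma sn_upper:
  assumes "(\<Sum>j\<in>J. (cmod (x $ j))\<^sup>2) = 1"
  shows "sqrt (\<Sum>i\<in>I. (cmod (\<Sum>j\<in>J. U $ i $ j * x $ j))\<^sup>2) \<le> submatrix_norm U I J"
  unfolding sn_def' using assms by (intro cSup_upper[OF _ sn_bdd]) (auto simp: snset_def)

lemma axis_norm1: "j0 \<in> J \<Longrightarrow> finite J \<Longrightarrow> (\<Sum>j\<in>J. (cmod (axis j0 (1::complex) $ j))\<^sup>2) = 1"
proof -
  assume "j0 \<in> J" "finite J"
  have e: "(\<lambda>j. (cmod (axis j0 (1::complex) $ j))\<^sup>2) = (\<lambda>j. if j = j0 then 1 else 0)"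
    by (auto simp: axis_def)
  show ?thesis unfolding e using \<open>j0 \<in> J\<close> \<open>finite J\<close> by simp
qed

lemma snset_ne: "J \<noteq> {} \<Longrightarrow> snset (U::complex^'n::finite^'n) I J \<noteq> {}"
proof -
  assume "J \<noteq> {}"
  then obtain j0 where "j0 \<in> J" by auto
  then have "(\<Sum>j\<in>J. (cmod (axis j0 (1::complex) $ j))\<^sup>2) = 1" by (intro axis_norm1) auto
  then show ?thesis unfolding snset_def by blast
qed

lemma sn_nonneg: "J \<noteq> {} \<Longrightarrow> 0 \<le> submatrix_norm (U::complex^'n::finite^'n) I J"
proof -
  assume "J \<noteq> {}"
  then obtain j0 where "j0 \<in> J" by auto
  then have "(\<Sum>j\<in>J. (cmod (axis j0 (1::complex) $ j))\<^sup>2) = 1" by (intro axis_norm1) auto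
  from sn_upper[OF this, where I=I and U=U] show ?thesis by (meson order.trans real_sqrt_ge_zero sum_nonneg zero_le_power2)
qed

lemma sn_bound_sq:
  fixes U :: "complex^'n::finite^'n"
  assumes "J \<noteq> {}"
  shows "(\<Sum>i\<in>I. (cmod (\<Sum>j\<in>J. U $ i $ j * x $ j))\<^sup>2)
           \<le> (submatrix_norm U I J)^2 * (\<Sum>j\<in>J. (cmod (x $ j))\<^sup>2)"
proof -
  define n2 where "n2 = (\<Sum>j\<in>J. (cmod (x $ j))\<^sup>2)"
  have n2nn: "n2 \<ge> 0" unfolding n2_def by (simp add: sum_nonneg)
  show ?thesis
  proof (cases "n2 = 0")
    case True
    then have "\<forall>j\<in>J. x $ j = 0" unfolding n2_def by (simp add: sum_nonneg_eq_0_iff)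
    then show ?thesis by (simp add: sum_nonneg)
  next
    case False
    then have n2p: "n2 > 0" using n2nn by simp
    define x' where "x' = of_real (1 / sqrt n2) *s x"
    have "(\<Sum>j\<in>J. (cmod (x' $ j))\<^sup>2) = (\<Sum>j\<in>J. (cmod (x $ j))\<^sup>2) / n2"
      unfolding x'_def using n2p by (simp add: norm_mult norm_divide power_divide sum_divide_distrib)
    then have x'1: "(\<Sum>j\<in>J. (cmod (x' $ j))\<^sup>2) = 1" using n2p unfolding n2_def by simp
    have "(\<Sum>i\<in>I. (cmod (\<Sum>j\<in>J. U $ i $ j * x' $ j))\<^sup>2)
        = (\<Sum>i\<in>I. (cmod (\<Sum>j\<in>J. U $ i $ j * x $ j))\<^sup>2) / n2"
    proof -
      have h: "(\<Sum>j\<in>J. U $ i $ j * x' $ j) = (\<Sum>j\<in>J. U $ i $ j * x $ j) / of_real (sqrt n2)" for i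
        unfolding x'_def by (simp add: sum_divide_distrib)
      show ?thesis using n2p
        by (simp only: h norm_divide power_divide) (simp add: sum_divide_distrib)
    qed
    moreover have "sqrt (\<Sum>i\<in>I. (cmod (\<Sum>j\<in>J. U $ i $ j * x' $ j))\<^sup>2) \<le> submatrix_norm U I J"
      by (rule sn_upper[OF x'1])
    ultimately have "sqrt ((\<Sum>i\<in>I. (cmod (\<Sum>j\<in>J. U $ i $ j * x $ j))\<^sup>2) / n2) \<le> submatrix_norm U I J"
      by simp
    then have "(\<Sum>i\<in>I. (cmod (\<Sum>j\<in>J. U $ i $ j * x $ j))\<^sup>2) / n2 \<le> (submatrix_norm U I J)^2"
      by (rule sqrt_le_D)
    then show ?thesis using n2p unfolding n2_def[symmetric] by (simp add: pos_divide_le_eq mult.commute)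
  qed
qed

lemma sn_mono:
  fixes U :: "complex^'n::finite^'n"
  assumes "J \<noteq> {}" "I \<subseteq> I'"
  shows "submatrix_norm U I J \<le> submatrix_norm U I' J"
  unfolding sn_def'
proof (rule cSup_mono[OF snset_ne[OF assms(1)] sn_bdd])
  fix t assume "t \<in> snset U I J"
  then obtain x where x: "(\<Sum>j\<in>J. (cmod (x $ j))\<^sup>2) = 1"
    and t: "t = sqrt (\<Sum>i\<in>I. (cmod (\<Sum>j\<in>J. U $ i $ j * x $ j))\<^sup>2)"
    unfolding snset_def by auto
  have "t \<le> sqrt (\<Sum>i\<in>I'. (cmod (\<Sum>j\<in>J. U $ i $ j * x $ j))\<^sup>2)"
    unfolding t using assms(2) by (intro real_sqrt_le_mono sum_mono2) auto
  moreover have "sqrt (\<Sum>i\<in>I'. (cmod (\<Sum>j\<in>J. U $ i $ j * x $ j))\<^sup>2) \<in> snset U I' J"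
    unfolding snset_def using x by blast
  ultimately show "\<exists>a\<in>snset U I' J. t \<le> a" by blast
qed



definition sset :: "complex^'n::finite^'n \<Rightarrow> nat \<Rightarrow> real set" where
  "sset U k = {submatrix_norm U I J | I J. I \<noteq> {} \<and> J \<noteq> {} \<and> card I + card J = k + 1}"

lemma s_def': "s_seq U k = Max (sset U k)"
  unfolding s_seq_def sset_def ..

lemma sset_finite: "finite (sset (U::complex^'n::finite^'n) k)"
proof (rule finite_subset)
  show "sset U k \<subseteq> (\<lambda>p. submatrix_norm U (fst p) (snd p)) ` UNIV"
  proof
    fix t assume "t \<in> sset U k"
    then obtain I J where tIJ: "t = submatrix_norm U I J" unfolding sset_def by blast
    have "(\<lambda>p. submatrix_norm U (fst p) (snd p)) (I, J) \<in> (\<lambda>p. submatrix_norm U (fst p) (snd p)) ` UNIV"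
      by (rule rangeI)
    then show "t \<in> (\<lambda>p. submatrix_norm U (fst p) (snd p)) ` UNIV" unfolding tIJ by simp
  qed
qed simp

lemma s_ge:
  fixes U :: "complex^'n::finite^'n"
  assumes "I \<noteq> {}" "J \<noteq> {}" "card I + card J = k + 1"
  shows "submatrix_norm U I J \<le> s_seq U k"
  unfolding s_def' using assms by (intro Max_ge[OF sset_finite]) (auto simp: sset_def)

lemma sset_ne:
  assumes "1 \<le> k" "k \<le> CARD('n::finite)"
  shows "\<exists>(I::'n set) (J::'n set). I \<noteq> {} \<and> J \<noteq> {} \<and> card I + card J = k + 1"
proof -
  obtain I :: "'n set" where I: "card I = k" using obtain_subset_with_card_n[of k "UNIV::'n set"] assms
    by auto
  have "I \<noteq> {}" using I assms by auto
  moreover obtain j0 :: 'n where True by simp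
  ultimately have "I \<noteq> {} \<and> {j0} \<noteq> {} \<and> card I + card {j0} = k + 1" using I by simp
  then show ?thesis by blast
qed

lemma s_nonneg:
  fixes U :: "complex^'n::finite^'n"
  assumes "1 \<le> k" "k \<le> CARD('n)"
  shows "0 \<le> s_seq U k"
proof -
  obtain I J :: "'n set" where IJ: "I \<noteq> {}" "J \<noteq> {}" "card I + card J = k + 1"
    using sset_ne[OF assms] by blast
  have "0 \<le> submatrix_norm U I J" using sn_nonneg IJ by blast
  also have "\<dots> \<le> s_seq U k" using s_ge[OF IJ] .
  finally show ?thesis .
qed

lemma s_mono:
  fixes U :: "complex^'n::finite^'n"
  assumes "1 \<le> k" "k < CARD('n)"
  shows "s_seq U k \<le> s_seq U (Suc k)"
proof -
  obtain I0 J0 :: "'n set" where IJ0: "I0 \<noteq> {}" "J0 \<noteq> {}" "card I0 + card J0 = k + 1"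
    using sset_ne[where 'n='n, of k] assms by auto
  have "submatrix_norm U I0 J0 \<in> sset U k" unfolding sset_def using IJ0 by blast
  then have ne: "sset U k \<noteq> {}" by auto
  show ?thesis unfolding s_def'[of U k]
  proof (subst Max_le_iff[OF sset_finite ne], intro ballI)
    fix t assume "t \<in> sset U k"
    then obtain I J where IJ: "t = submatrix_norm U I J" "I \<noteq> {}" "J \<noteq> {}" "card I + card J = k + 1"
      unfolding sset_def by blast
    have "card J \<ge> 1" using IJ(3) by (simp add: Suc_leI card_gt_0_iff)
    then have "card I < CARD('n)" using IJ(4) assms by simp
    then have "I \<noteq> UNIV" by auto
    then obtain i0 where i0: "i0 \<notin> I" by auto
    have "t \<le> submatrix_norm U (insert i0 I) J" unfolding IJ(1) using IJ(3) by (intro sn_mono) auto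
    also have "\<dots> \<le> s_seq U (Suc k)"
      using IJ i0 by (intro s_ge) auto
    finally show "t \<le> s_seq U (Suc k)" .
  qed
qed

lemma W_nonneg:
  fixes U :: "complex^'n::finite^'n"
  assumes "1 \<le> k" "k \<le> CARD('n)"
  shows "0 \<le> W_seq U k"
proof (cases "k = 1")
  case True then show ?thesis using s_nonneg[of 1] assms unfolding W_seq_def by simp
next
  case False
  then have "s_seq U (k - 1) \<le> s_seq U (Suc (k - 1))" using assms by (intro s_mono) auto
  then show ?thesis using False assms unfolding W_seq_def by simp
qed

lemma W_sum:
  fixes U :: "complex^'n::finite^'n"
  shows "1 \<le> K \<Longrightarrow> (\<Sum>m=1..K. W_seq U m) = s_seq U K"
proof (induction K)
  case 0 then show ?case by simp
next
  case (Suc K)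
  show ?case
  proof (cases "K = 0")
    case True then show ?thesis unfolding W_seq_def by simp
  next
    case False
    then have "(\<Sum>m=1..Suc K. W_seq U m) = s_seq U K + W_seq U (Suc K)" using Suc by simp
    then show ?thesis unfolding W_seq_def using False by simp
  qed
qed

lemma s_top:
  fixes a b :: "'n::finite \<Rightarrow> complex^'n"
  assumes oa: "orthonormal_basis_c a" and ob: "orthonormal_basis_c b"
  shows "1 \<le> s_seq (\<chi> i j. cinner (a i) (b j)) CARD('n)"
proof -
  obtain j0 :: 'n where True by simp
  define U where "U = (\<chi> i j. cinner (a i) (b j))"
  have x1: "(\<Sum>j\<in>{j0}. (cmod (axis j0 (1::complex) $ j))\<^sup>2) = 1" by (simp add: axis_def)
  have "(\<Sum>i\<in>UNIV. (cmod (\<Sum>j\<in>{j0}. U $ i $ j * axis j0 1 $ j))\<^sup>2)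
      = (\<Sum>i\<in>UNIV. (cmod (cinner (a i) (b j0)))\<^sup>2)" unfolding U_def by (simp add: axis_def)
  also have "\<dots> = Re (\<Sum>i\<in>UNIV. cinner (a i) (b j0) * cnj (cinner (a i) (b j0)))"
    by (simp add: Re_sum complex_norm_square[symmetric] del: of_real_power)
  also have "\<dots> = 1" unfolding parseval[OF oa] onb_inner[OF ob] by simp
  finally have "1 \<le> submatrix_norm U UNIV {j0}" using sn_upper[OF x1, where I=UNIV and U=U] by simp
  also have "\<dots> \<le> s_seq U CARD('n)" by (intro s_ge) auto
  finally show ?thesis unfolding U_def .
qed



lemma Y_form:
  fixes W :: "nat \<Rightarrow> real" and d :: nat
  defines "y \<equiv> \<lambda>m. if m = 0 then 1 else if m \<le> d then W m else 0"
  shows "1 \<le> K \<Longrightarrow> (\<Sum>m<K. y m) = 1 + (\<Sum>m=1..min (K - 1) d. W m)"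
proof (induction K)
  case 0 then show ?case by simp
next
  case (Suc K)
  show ?case
  proof (cases "K = 0")
    case True then show ?thesis unfolding y_def by simp
  next
    case False
    then have IH: "(\<Sum>m<K. y m) = 1 + (\<Sum>m=1..min (K - 1) d. W m)" using Suc by simp
    show ?thesis
    proof (cases "K \<le> d")
      case True
      then have "min (Suc K - 1) d = Suc (min (K - 1) d)" using False by simp
      obtain K' where K': "K = Suc K'" using False by (cases K) auto
      have "(\<Sum>m=1..min (Suc K - 1) d. W m) = (\<Sum>m=1..Suc K'. W m)" using True K' by simp
      also have "\<dots> = (\<Sum>m=1..K'. W m) + W K" unfolding K' by (simp add: sum.cl_ivl_Suc)
      finally have "(\<Sum>m=1..min (Suc K - 1) d. W m) = (\<Sum>m=1..min (K - 1) d. W m) + W K"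
        using True K' by simp
      then show ?thesis using IH True False unfolding y_def by simp
    next
      case False
      then have "min (Suc K - 1) d = min (K - 1) d" by simp
      then show ?thesis using IH False unfolding y_def by simp
    qed
  qed
qed

lemma renyi_sum_bound:
  fixes P Q R \<alpha> :: real
  assumes "P > 0" "Q > 0" "P + Q \<le> R" "\<alpha> > 1"
  shows "1 / (1 - \<alpha>) * ln P + 1 / (1 - \<alpha>) * ln Q \<ge> 2 / (1 - \<alpha>) * ln (R / 2)"
proof -
  have R: "R / 2 > 0" using assms by simp
  have eq: "((P + Q) / 2)^2 = P * Q + ((P - Q) / 2)^2" by (simp add: power2_eq_square field_simps)
  have "P * Q \<le> ((P + Q) / 2)^2" unfolding eq by simp
  also have "\<dots> \<le> (R / 2)^2" using assms by (intro power_mono) auto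
  finally have "ln (P * Q) \<le> ln ((R / 2)^2)" using assms by simp
  then have "ln P + ln Q \<le> 2 * ln (R / 2)" using assms R by (simp add: ln_mult ln_realpow)
  moreover have "1 / (1 - \<alpha>) < 0" using assms by simp
  ultimately have "1 / (1 - \<alpha>) * (2 * ln (R / 2)) \<le> 1 / (1 - \<alpha>) * (ln P + ln Q)"
    by (intro mult_left_mono_neg) auto
  then show ?thesis by (simp add: algebra_simps add_divide_distrib)
qed

lemma powr_sum_pos:
  fixes p :: "'n::finite \<Rightarrow> real"
  assumes "\<And>i. p i \<ge> 0" "(\<Sum>i\<in>UNIV. p i) = 1"
  shows "(\<Sum>i\<in>UNIV. p i powr a) > 0"
proof -
  obtain i0 where "p i0 \<noteq> 0" using assms(2) by (metis sum.neutral zero_neq_one)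
  then have "p i0 powr a > 0" by simp
  also have "p i0 powr a \<le> (\<Sum>i\<in>UNIV. p i powr a)" by (intro member_le_sum) auto
  finally show ?thesis .
qed



theorem mainTheorem3:
  fixes a b :: "'n::finite \<Rightarrow> complex ^ 'n"
    and \<rho> :: "complex ^ 'n ^ 'n"
    and \<alpha> :: real
  assumes "orthonormal_basis_c a"
    and "orthonormal_basis_c b"
    and "density_matrix \<rho>"
    and "\<alpha> > 1"
  shows "renyi_entropy \<alpha> (\<lambda>i. Re (cinner (a i) (\<rho> *v a i)))
         + renyi_entropy \<alpha> (\<lambda>j. Re (cinner (b j) (\<rho> *v b j)))
         \<ge> 2 / (1 - \<alpha>) * ln ((1 + (\<Sum>k=1..CARD('n).
               W_seq (\<chi> i j. cinner (a i) (b j)) k powr \<alpha>)) / 2)"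
proof -
  note oa = assms(1) and ob = assms(2) and dm = assms(3) and al = assms(4)
  define d where "d = CARD('n)"
  define U where "U = (\<chi> i j. cinner (a i) (b j))"
  define p where "p i = Re (cinner (a i) (\<rho> *v a i))" for i
  define q where "q j = Re (cinner (b j) (\<rho> *v b j))" for j
  have pnn: "p i \<ge> 0" for i unfolding p_def using dm_psd[OF dm] by blast
  have qnn: "q j \<ge> 0" for j unfolding q_def using dm_psd[OF dm] by blast
  have psum: "(\<Sum>i\<in>UNIV. p i) = 1" unfolding p_def by (rule prob_sum[OF oa dm])
  have qsum: "(\<Sum>j\<in>UNIV. q j) = 1" unfolding q_def by (rule prob_sum[OF ob dm])
  have key: "(\<Sum>i\<in>I. p i) + (\<Sum>j\<in>J. q j) \<le> 1 + submatrix_norm U I J" if "J \<noteq> {}" for I J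
  proof -
    have "\<And>x. (\<Sum>i\<in>I. (cmod (\<Sum>j\<in>J. cinner (a i) (b j) * x $ j))^2)
                 \<le> (submatrix_norm U I J)^2 * (\<Sum>j\<in>J. (cmod (x $ j))^2)"
      using sn_bound_sq[OF that, where I=I and U=U] unfolding U_def by simp
    from mixed_key[OF oa ob sn_nonneg[OF that] dm this] show ?thesis
      unfolding p_def q_def .
  qed
  have psub: "(\<Sum>i\<in>I. p i) \<le> 1" for I
    using sum_mono2[of UNIV I p] pnn psum by simp
  have qsub: "(\<Sum>j\<in>J. q j) \<le> 1" for J
    using sum_mono2[of UNIV J q] qnn qsum by simp
  define x where "x = case_sum p q"
  define y where "y = (\<lambda>m. if m = 0 then 1 else if m \<le> d then W_seq U m else (0::real))"
  have card2: "CARD('n + 'n) = d + d"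
    unfolding d_def using card_Plus[of "UNIV::'n set" "UNIV::'n set"] by simp
  have Wnn: "1 \<le> m \<Longrightarrow> m \<le> d \<Longrightarrow> W_seq U m \<ge> 0" for m
    unfolding d_def by (rule W_nonneg)
  have Yf: "1 \<le> K \<Longrightarrow> (\<Sum>m<K. y m) = 1 + (\<Sum>m=1..min (K - 1) d. W_seq U m)" for K
    unfolding y_def by (rule Y_form)
  have Y1: "1 \<le> K \<Longrightarrow> (\<Sum>m<K. y m) \<ge> 1" for K
  proof -
    assume K: "1 \<le> K"
    have "0 \<le> (\<Sum>m=1..min (K - 1) d. W_seq U m)" using Wnn by (intro sum_nonneg) auto
    then show ?thesis using Yf[OF K] by simp
  qed
  have Y2: "2 \<le> K \<Longrightarrow> K - 1 \<le> d \<Longrightarrow> (\<Sum>m<K. y m) = 1 + s_seq U (K - 1)" for K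
    using Yf[of K] W_sum[of "K - 1" U] by simp
  have Y3: "d \<le> K - 1 \<Longrightarrow> 1 \<le> K \<Longrightarrow> (\<Sum>m<K. y m) \<ge> 2" for K
  proof -
    assume "d \<le> K - 1" "1 \<le> K"
    have "d \<ge> 1" unfolding d_def by (simp add: Suc_leI)
    then have "(\<Sum>m<K. y m) = 1 + s_seq U d" using Yf[of K] W_sum[of d U] \<open>d \<le> K - 1\<close> \<open>1 \<le> K\<close>
      by (simp add: min_absorb2)
    moreover have "1 \<le> s_seq U d" unfolding U_def d_def by (rule s_top[OF oa ob])
    ultimately show ?thesis by simp
  qed
  have maj: "(\<Sum>t\<in>S. x t) \<le> (\<Sum>m<card S. y m)" for S
  proof -
    define I where "I = {i. Inl i \<in> S}"
    define J where "J = {j. Inr j \<in> S}"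
    have S: "S = I <+> J"
    proof
      show "S \<subseteq> I <+> J"
      proof
        fix t assume "t \<in> S"
        then show "t \<in> I <+> J" unfolding I_def J_def by (cases t) auto
      qed
      show "I <+> J \<subseteq> S" unfolding I_def J_def by auto
    qed
    have sumS: "(\<Sum>t\<in>S. x t) = (\<Sum>i\<in>I. p i) + (\<Sum>j\<in>J. q j)"
      unfolding S x_def by (simp add: sum.Plus comp_def)
    have cardS: "card S = card I + card J" unfolding S by (simp add: card_Plus)
    show ?thesis
    proof (cases "I = {} \<and> J = {}")
      case True then show ?thesis using sumS cardS by simp
    next
      case ne: False
      have K1: "1 \<le> card S" using ne cardS by (auto simp: card_gt_0_iff Suc_le_eq)
      show ?thesis
      proof (cases "J = {}")
        case True
        then show ?thesis using sumS psub[of I] Y1[OF K1] by simp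
      next
        case Jne: False
        show ?thesis
        proof (cases "I = {}")
          case True
          then show ?thesis using sumS qsub[of J] Y1[OF K1] by simp
        next
          case Ine: False
          have cI: "card I \<ge> 1" "card J \<ge> 1" using Ine Jne by (auto simp: card_gt_0_iff Suc_le_eq)
          show ?thesis
          proof (cases "card S - 1 \<le> d")
            case True
            have "(\<Sum>t\<in>S. x t) \<le> 1 + submatrix_norm U I J" using sumS key[OF Jne, of I] by simp
            also have "submatrix_norm U I J \<le> s_seq U (card S - 1)"
              using Ine Jne cardS cI by (intro s_ge) auto
            also have "1 + s_seq U (card S - 1) = (\<Sum>m<card S. y m)"
              using Y2[of "card S"] True cardS cI by simp
            finally show ?thesis by simp
          next
            case False
            have "(\<Sum>t\<in>S. x t) \<le> 2" using sumS psub[of I] qsub[of J] by simp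
            also have "\<dots> \<le> (\<Sum>m<card S. y m)" using False K1 by (intro Y3) auto
            finally show ?thesis .
          qed
        qed
      qed
    qed
  qed
  have xnn: "x t \<ge> 0" for t unfolding x_def using pnn qnn by (cases t) auto
  have ynn: "y m \<ge> 0" if "m < CARD('n + 'n)" for m
    unfolding y_def using Wnn[of m] by auto
  have main: "(\<Sum>t\<in>UNIV. x t powr \<alpha>) \<le> (\<Sum>m<CARD('n + 'n). y m powr \<alpha>)"
    by (rule weak_major_powr[OF xnn ynn al maj])
  have lhs: "(\<Sum>t\<in>UNIV. x t powr \<alpha>) = (\<Sum>i\<in>UNIV. p i powr \<alpha>) + (\<Sum>j\<in>UNIV. q j powr \<alpha>)"
    using sum.Plus[of "UNIV::'n set" "UNIV::'n set" "\<lambda>t. x t powr \<alpha>"]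
    unfolding UNIV_Plus_UNIV x_def by (simp add: comp_def)
  have rhs: "(\<Sum>m<CARD('n + 'n). y m powr \<alpha>) = 1 + (\<Sum>k=1..d. W_seq U k powr \<alpha>)"
  proof -
    have e: "(\<lambda>m. y m powr \<alpha>) = (\<lambda>m. (if m = 0 then 1 else 0) + (if m \<in> {1..d} then W_seq U m powr \<alpha> else 0))"
      unfolding y_def by (auto simp: fun_eq_iff)
    have "(\<Sum>m<CARD('n + 'n). (if m = 0 then 1 else (0::real))) = 1"
      using card2 by (simp add: d_def)
    moreover have "(\<Sum>m<CARD('n + 'n). if m \<in> {1..d} then W_seq U m powr \<alpha> else 0)
        = (\<Sum>k=1..d. W_seq U k powr \<alpha>)"
    proof -
      have eqs: "{..<CARD('n + 'n)} \<inter> {1..d} = {1..d}" using card2 by auto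
      show ?thesis by (simp only: sum.inter_restrict[OF finite_lessThan, symmetric] eqs)
    qed
    ultimately show ?thesis unfolding e sum.distrib by simp
  qed
  have PQ: "(\<Sum>i\<in>UNIV. p i powr \<alpha>) + (\<Sum>j\<in>UNIV. q j powr \<alpha>) \<le> 1 + (\<Sum>k=1..d. W_seq U k powr \<alpha>)"
    using main lhs rhs by simp
  have Pp: "(\<Sum>i\<in>UNIV. p i powr \<alpha>) > 0" by (rule powr_sum_pos[OF pnn psum])
  have Qp: "(\<Sum>j\<in>UNIV. q j powr \<alpha>) > 0" by (rule powr_sum_pos[OF qnn qsum])
  have "1 / (1 - \<alpha>) * ln (\<Sum>i\<in>UNIV. p i powr \<alpha>) + 1 / (1 - \<alpha>) * ln (\<Sum>j\<in>UNIV. q j powr \<alpha>)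
      \<ge> 2 / (1 - \<alpha>) * ln ((1 + (\<Sum>k=1..d. W_seq U k powr \<alpha>)) / 2)"
    by (rule renyi_sum_bound[OF Pp Qp PQ al])
  then show ?thesis unfolding renyi_entropy_def p_def q_def U_def d_def .
qed

end
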